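(* In the stochastic linear bandit setting with SGD updates described below, assume $0<\eta\le\lambda/L^2$. Then for all $t\in\mathbb{N}$, almost surely, $$X_t\le X_{t-1}+N_t,\qquad N_t=2\eta\epsilon_t(\theta_{t-1}-\theta_* )^\top x_t-2\eta^3\epsilon_t(\theta_{t-1}-\theta_* )^\top x_t\,\|x_t\|_{V_{t-1}^{-1}}^4+2\epsilon_t^2\eta^2\|x_t\|_{V_{t-1}^{-1}}^2,$$ where $X_t=\|\theta_t-\theta_*\|_{V_t}^2$. In particular $X_t\le X_0+\sum_{i=1}^tN_i$.
   Context: Setting: unknown $\theta_*\in\mathbb{R}^d$ with $\|\theta_*\|_2\le L_*$. At each round $t\ge1$ a decision set $D_t\subseteq\{x\in\mathbb{R}^d:\|x\|_2\le L\}$ is given, the agent chooses $x_t\in D_t$ based on the past, and observes $y_t=\theta_*^\top x_t+\epsilon_t$, where $|\epsilon_t|\le1$ almost surely and $\mathbb{E}[\epsilon_t\mid x_{1:t},\epsilon_{1:t-1}]=0$. With $\lambda>0$ and step size $\eta>0$, the learner maintains $V_0=\lambda I$, $\theta_0=0$, and for $t\ge1$: $V_t=V_{t-1}+\eta x_tx_t^\top$ and $\theta_t=\theta_{t-1}+\eta V_{t-1}^{-1}(y_t-\theta_{t-1}^\top x_t)x_t$. For a positive definite matrix $A$, $\|v\|_A=\sqrt{v^\top Av}$. *)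

theory Defs
  imports "HOL-Analysis.Analysis" "HOL-Probability.Probability"
begin

definition outer :: "real^'d \<Rightarrow> real^'d \<Rightarrow> real^'d^'d" where
  "outer x y = (\<chi> i j. x $ i * y $ j)"

definition mnorm :: "real^'d^'d \<Rightarrow> real^'d \<Rightarrow> real" where
  "mnorm A v = sqrt (v \<bullet> (A *v v))"

primrec Vmat :: "real \<Rightarrow> real \<Rightarrow> (nat \<Rightarrow> real^'d) \<Rightarrow> nat \<Rightarrow> real^'d^'d" where
  "Vmat lam eta xs 0 = lam *\<^sub>R mat 1"
| "Vmat lam eta xs (Suc t) = Vmat lam eta xs t + eta *\<^sub>R outer (xs (Suc t)) (xs (Suc t))"

primrec theta :: "real \<Rightarrow> real \<Rightarrow> (nat \<Rightarrow> real^'d) \<Rightarrow> (nat \<Rightarrow> real) \<Rightarrow> nat \<Rightarrow> real^'d" where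
  "theta lam eta xs ys 0 = 0"
| "theta lam eta xs ys (Suc t) = theta lam eta xs ys t
     + (eta * (ys (Suc t) - theta lam eta xs ys t \<bullet> xs (Suc t)))
        *\<^sub>R (matrix_inv (Vmat lam eta xs t) *v xs (Suc t))"

definition hist_alg :: "'a measure \<Rightarrow> (nat \<Rightarrow> 'a \<Rightarrow> real^'d) \<Rightarrow> (nat \<Rightarrow> 'a \<Rightarrow> real) \<Rightarrow> nat \<Rightarrow> 'a measure" where
  "hist_alg M x eps t = sigma (space M)
     ((\<Union>i\<in>{1..t}. {x i -` A \<inter> space M | A. A \<in> sets borel})
      \<union> (\<Union>i\<in>{1..<t}. {eps i -` B \<inter> space M | B. B \<in> sets borel}))"

end

theory Submission
  imports Defs
begin

lemma outer_mv: "outer x x *v w = (x \<bullet> w) *\<^sub>R (x::real^'d)"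
  by (simp add: outer_def vec_eq_iff matrix_vector_mult_def inner_vec_def sum_distrib_left mult.commute mult.left_commute)

lemma Vmat_mv: "Vmat lam eta xs t *v w = lam *\<^sub>R w + (\<Sum>i\<in>{1..t}. (eta * (xs i \<bullet> w)) *\<^sub>R xs i)"
proof (induction t)
  case 0 then show ?case by (simp add: scaleR_matrix_vector_assoc[symmetric])
next
  case (Suc t)
  have "Vmat lam eta xs (Suc t) *v w = Vmat lam eta xs t *v w + eta *\<^sub>R (outer (xs (Suc t)) (xs (Suc t)) *v w)"
    by (simp add: matrix_vector_mult_add_rdistrib scaleR_matrix_vector_assoc)
  then show ?case using Suc by (simp add: outer_mv sum.cl_ivl_Suc algebra_simps)
qed

lemma Vmat_step: "Vmat lam eta xs (Suc t) *v w = Vmat lam eta xs t *v w + (eta * (xs (Suc t) \<bullet> w)) *\<^sub>R xs (Suc t)"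
  by (simp add: matrix_vector_mult_add_rdistrib scaleR_matrix_vector_assoc[symmetric] outer_mv)

lemma Vmat_quad: "u \<bullet> (Vmat lam eta xs t *v w) = lam * (u \<bullet> w) + (\<Sum>i\<in>{1..t}. eta * (xs i \<bullet> w) * (xs i \<bullet> u))"
  by (simp add: Vmat_mv inner_sum_right inner_add_right inner_commute)

lemma Vmat_sym: "u \<bullet> (Vmat lam eta xs t *v w) = w \<bullet> (Vmat lam eta xs t *v u)"
  by (simp add: Vmat_quad inner_commute mult.commute mult.left_commute)

lemma Vmat_pos: assumes "eta \<ge> 0" shows "w \<bullet> (Vmat lam eta xs t *v w) \<ge> lam * (w \<bullet> w)"
proof -
  have "(\<Sum>i\<in>{1..t}. eta * (xs i \<bullet> w) * (xs i \<bullet> w)) \<ge> 0"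
    by (intro sum_nonneg) (simp add: assms mult.assoc)
  then show ?thesis by (simp add: Vmat_quad)
qed

lemma Vmat_inv: assumes "lam > 0" "eta \<ge> 0"
  shows "Vmat lam eta xs t *v (matrix_inv (Vmat lam eta xs t) *v v) = v"
proof -
  let ?V = "Vmat lam eta xs t"
  have "\<forall>x. ?V *v x = 0 \<longrightarrow> x = 0"
  proof (intro allI impI)
    fix x assume "?V *v x = 0"
    then have "lam * (x \<bullet> x) \<le> 0" using Vmat_pos[OF assms(2), where w=x and lam=lam and xs=xs and t=t] by simp
    then have "x \<bullet> x \<le> 0" using assms(1) by (simp add: mult_le_0_iff)
    then show "x = 0" by (metis inner_gt_zero_iff not_le)
  qed
  then have "invertible ?V" using matrix_left_invertible_ker invertible_left_inverse by blast
  then have "?V ** matrix_inv ?V = mat 1"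
    unfolding invertible_def matrix_inv_def by (rule someI_ex[where P="\<lambda>A'. ?V ** A' = mat 1 \<and> A' ** ?V = mat 1", THEN conjunct1])
  then show ?thesis by (metis matrix_vector_mul_assoc matrix_vector_mul_lid)
qed

lemma step_alg:
  fixes X a q e eta Y N :: real
  assumes "Y = X + 2*eta*(e - a)*a + eta^2*(e-a)^2*q + eta*(a + eta*(e-a)*q)^2"
    and "N = 2*eta*e*a - 2*eta^3*e*a*q^2 + 2*e^2*eta^2*q"
    and "q \<ge> 0" "eta > 0" "eta * q \<le> 1"
  shows "Y \<le> X + N"
proof -
  have eq: "Y - X - N = a^2*eta*(-1 - eta*q + (eta*q)^2) + e^2*eta^2*q*(eta*q - 1)"
    using assms(1,2) by (simp add: power2_eq_square power3_eq_cube algebra_simps)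
  have "(eta*q)^2 \<le> eta*q" using assms(3,4,5) by (simp add: power2_eq_square mult_left_le)
  then have "-1 - eta*q + (eta*q)^2 \<le> 0" by linarith
  then have t1: "a^2*eta*(-1 - eta*q + (eta*q)^2) \<le> 0"
    using assms(4) by (simp add: mult_nonneg_nonpos)
  have t2: "e^2*eta^2*q*(eta*q - 1) \<le> 0"
    using assms(3,5) by (simp add: mult_nonneg_nonpos)
  show ?thesis using eq t1 t2 by linarith
qed

lemma step:
  fixes xs :: "nat \<Rightarrow> real^'d" and e :: "nat \<Rightarrow> real"
  assumes lam: "lam > 0" and eta: "eta > 0" and L: "eta * L^2 \<le> lam" and nx: "norm (xs (Suc t)) \<le> L"
    and ys: "ys = (\<lambda>i. ts \<bullet> xs i + e i)"
  shows "(mnorm (Vmat lam eta xs (Suc t)) (theta lam eta xs ys (Suc t) - ts))\<^sup>2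
     \<le> (mnorm (Vmat lam eta xs t) (theta lam eta xs ys t - ts))\<^sup>2
       + (2 * eta * e (Suc t) * ((theta lam eta xs ys t - ts) \<bullet> xs (Suc t))
          - 2 * eta ^ 3 * e (Suc t) * ((theta lam eta xs ys t - ts) \<bullet> xs (Suc t))
              * (mnorm (matrix_inv (Vmat lam eta xs t)) (xs (Suc t))) ^ 4
          + 2 * (e (Suc t))\<^sup>2 * eta\<^sup>2 * (mnorm (matrix_inv (Vmat lam eta xs t)) (xs (Suc t)))\<^sup>2)"
proof -
  define V where "V = Vmat lam eta xs t"
  define x where "x = xs (Suc t)"
  define z where "z = matrix_inv V *v x"
  define D where "D = theta lam eta xs ys t - ts"
  define a where "a = D \<bullet> x"
  define s where "s = x \<bullet> z"
  define r where "r = e (Suc t) - a"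
  have Vz: "V *v z = x" unfolding z_def V_def using eta by (intro Vmat_inv[OF lam]) simp
  have sym: "\<And>u w. u \<bullet> (V *v w) = w \<bullet> (V *v u)" unfolding V_def by (rule Vmat_sym)
  have pos: "\<And>w. w \<bullet> (V *v w) \<ge> lam * (w \<bullet> w)" unfolding V_def using eta by (intro Vmat_pos) simp
  have D': "theta lam eta xs ys (Suc t) - ts = D + (eta * r) *\<^sub>R z"
  proof -
    have rr: "ys (Suc t) - theta lam eta xs ys t \<bullet> xs (Suc t) = r"
      by (simp add: ys r_def a_def D_def x_def inner_diff_left inner_diff_right inner_commute)
    show ?thesis by (simp add: rr D_def z_def x_def V_def)
  qed
  have s_eq: "s = z \<bullet> (V *v z)" by (simp add: s_def Vz inner_commute)
  have zz: "lam * (z \<bullet> z) \<le> s" using pos[of z] s_eq by simp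
  have s0: "s \<ge> 0" proof - have "lam * (z \<bullet> z) \<ge> 0" using lam by simp then show ?thesis using zz by linarith qed
  have "s \<le> norm x * norm z" unfolding s_def by (rule norm_cauchy_schwarz)
  have nz: "(z \<bullet> z) = (norm z)^2" by (simp add: power2_norm_eq_inner)
  have "lam * (norm z)^2 \<le> norm x * norm z" using zz nz \<open>s \<le> norm x * norm z\<close> by simp
  then have "lam * norm z \<le> norm x"
  proof (cases "norm z = 0")
    case True then show ?thesis by simp
  next
    case False then have "norm z > 0" by simp
    moreover have "(lam * norm z) * norm z \<le> norm x * norm z" using \<open>lam * (norm z)^2 \<le> norm x * norm z\<close> by (simp add: power2_eq_square mult.assoc)
    ultimately show ?thesis by (meson mult_right_le_imp_le)
  qed
  then have "lam * s \<le> lam * (norm x * norm z)" using \<open>s \<le> norm x * norm z\<close> lam by simp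
  also have "\<dots> = norm x * (lam * norm z)" by simp
  also have "\<dots> \<le> norm x * norm x" using \<open>lam * norm z \<le> norm x\<close> by (simp add: mult_left_mono)
  also have "\<dots> \<le> L^2" unfolding x_def using mult_mono[OF nx nx order_trans[OF norm_ge_zero nx] norm_ge_zero] by (simp add: power2_eq_square)
  finally have "lam * s \<le> L^2" .
  then have "eta * (lam * s) \<le> eta * L^2" using eta by simp
  then have "lam * (eta * s) \<le> lam * 1" using L by (simp add: algebra_simps)
  then have es: "eta * s \<le> 1" using lam by simp
  have mn2: "(mnorm (matrix_inv V) x)^2 = s" unfolding mnorm_def s_def z_def using s0 s_def z_def by simp
  have mn4: "(mnorm (matrix_inv V) x)^4 = s^2"
  proof -
    have "(mnorm (matrix_inv V) x)^4 = ((mnorm (matrix_inv V) x)^2)^2" by (simp flip: power_mult)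
    then show ?thesis using mn2 by simp
  qed
  have "D \<bullet> (V *v D) \<ge> 0" using pos[of D] lam
    by (metis inner_ge_zero mult_nonneg_nonneg order_trans less_imp_le)
  then have X0: "(mnorm V D)^2 = D \<bullet> (V *v D)"
    unfolding mnorm_def by simp
  have V': "\<And>w. Vmat lam eta xs (Suc t) *v w = V *v w + (eta * (x \<bullet> w)) *\<^sub>R x"
    unfolding V_def x_def by (rule Vmat_step)
  have pos': "\<And>w. w \<bullet> (Vmat lam eta xs (Suc t) *v w) \<ge> 0"
  proof -
    fix w :: "real^'d"
    have "w \<bullet> (Vmat lam eta xs (Suc t) *v w) \<ge> lam * (w \<bullet> w)" using eta by (intro Vmat_pos) simp
    moreover have "lam * (w \<bullet> w) \<ge> 0" using lam by simp
    ultimately show "w \<bullet> (Vmat lam eta xs (Suc t) *v w) \<ge> 0" by linarith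
  qed
  define c where "c = eta * r"
  define D2 where "D2 = D + c *\<^sub>R z"
  have X1: "(mnorm (Vmat lam eta xs (Suc t)) D2)^2 = D2 \<bullet> (V *v D2) + eta * (x \<bullet> D2)^2"
  proof -
    have "(mnorm (Vmat lam eta xs (Suc t)) D2)^2 = D2 \<bullet> (Vmat lam eta xs (Suc t) *v D2)"
      unfolding mnorm_def using pos'[of D2] by simp
    also have "\<dots> = D2 \<bullet> (V *v D2) + eta * (x \<bullet> D2) * (D2 \<bullet> x)"
      by (subst V') (simp only: inner_add_right inner_scaleR_right mult.assoc)
    finally show ?thesis by (simp add: inner_commute power2_eq_square)
  qed
  have VD2: "V *v D2 = V *v D + c *\<^sub>R x"
    by (simp add: D2_def matrix_vector_right_distrib matrix_scaleR_vector_ac scaleR_matrix_vector_assoc[symmetric] Vz)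
  have Dx: "D \<bullet> x = a" by (simp add: a_def)
  have zVD: "z \<bullet> (V *v D) = a" using sym[of z D] Vz by (simp add: a_def inner_commute)
  have zx: "z \<bullet> x = s" by (simp add: s_def inner_commute)
  have "D2 \<bullet> (V *v D2) = D \<bullet> (V *v D) + c * (D \<bullet> x) + c * (z \<bullet> (V *v D)) + c * c * (z \<bullet> x)"
    unfolding VD2 by (simp add: D2_def inner_add_left inner_add_right algebra_simps)
  then have e1: "D2 \<bullet> (V *v D2) = D \<bullet> (V *v D) + 2 * c * a + c^2 * s"
    by (simp add: Dx zVD zx power2_eq_square)
  have e2: "x \<bullet> D2 = a + c * s" by (simp add: D2_def inner_add_right a_def s_def inner_commute)
  have D'': "theta lam eta xs ys (Suc t) - ts = D2" using D' by (simp add: D2_def c_def)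
  have "(mnorm (Vmat lam eta xs (Suc t)) D2)^2 = (mnorm V D)^2 + 2*eta*(e (Suc t) - a)*a + eta^2*(e (Suc t)-a)^2 * s + eta*(a + eta*(e (Suc t)-a) * s)^2"
    using X1 X0 e1 e2 by (simp add: c_def r_def power_mult_distrib)
  then show ?thesis
    apply (simp only: D'' flip: V_def x_def D_def)
    apply (rule step_alg[where e="e (Suc t)" and a=a, OF _ _ s0 eta es])
     apply (rule refl)
    by (simp add: mn2 mn4 a_def)
qed

lemma final_combine:
  fixes X N :: "nat \<Rightarrow> 'a \<Rightarrow> real"
  assumes "\<forall>\<omega>\<in>space M. \<forall>k. X (Suc k) \<omega> \<le> X k \<omega> + N (Suc k) \<omega>"
  shows "(\<forall>t\<ge>1. AE \<omega> in M. X t \<omega> \<le> X (t - 1) \<omega> + N t \<omega>)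
      \<and> (\<forall>t. AE \<omega> in M. X t \<omega> \<le> X 0 \<omega> + (\<Sum>i=1..t. N i \<omega>))"
proof (intro conjI allI impI)
  fix t :: nat assume "t \<ge> 1"
  then obtain k where t: "t = Suc k" by (cases t) auto
  show "AE \<omega> in M. X t \<omega> \<le> X (t - 1) \<omega> + N t \<omega>"
    using assms by (intro AE_I2) (simp add: t)
next
  fix t :: nat
  show "AE \<omega> in M. X t \<omega> \<le> X 0 \<omega> + (\<Sum>i=1..t. N i \<omega>)"
  proof (intro AE_I2)
    fix \<omega> assume w: "\<omega> \<in> space M"
    show "X t \<omega> \<le> X 0 \<omega> + (\<Sum>i=1..t. N i \<omega>)"
    proof (induction t)
      case 0 then show ?case by simp
    next
      case (Suc t)
      have "X (Suc t) \<omega> \<le> X t \<omega> + N (Suc t) \<omega>" using assms w by blast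
      then show ?case using Suc by (simp add: sum.cl_ivl_Suc)
    qed
  qed
qed

theorem mainTheorem8:
  fixes M :: "'a measure"
    and theta_star :: "real^'d"
    and L_star L lam eta :: real
    and D :: "nat \<Rightarrow> 'a \<Rightarrow> (real^'d) set"
    and x :: "nat \<Rightarrow> 'a \<Rightarrow> real^'d"
    and eps :: "nat \<Rightarrow> 'a \<Rightarrow> real"
  assumes "prob_space M"
    and "norm theta_star \<le> L_star"
    and "\<And>t \<omega>. t \<ge> 1 \<Longrightarrow> \<omega> \<in> space M \<Longrightarrow> D t \<omega> \<subseteq> {v. norm v \<le> L}"
    and "\<And>t \<omega>. t \<ge> 1 \<Longrightarrow> \<omega> \<in> space M \<Longrightarrow> x t \<omega> \<in> D t \<omega>"
    and "\<And>t. t \<ge> 1 \<Longrightarrow> x t \<in> borel_measurable M"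
    and "\<And>t. t \<ge> 1 \<Longrightarrow> eps t \<in> borel_measurable M"
    and "\<And>t. t \<ge> 1 \<Longrightarrow> AE \<omega> in M. \<bar>eps t \<omega>\<bar> \<le> 1"
    and "\<And>t. t \<ge> 1 \<Longrightarrow> AE \<omega> in M. real_cond_exp M (hist_alg M x eps t) (eps t) \<omega> = 0"
    and "lam > 0"
    and "eta > 0"
    and "eta * L\<^sup>2 \<le> lam"
  shows
    "let y = (\<lambda>\<omega> t. theta_star \<bullet> x t \<omega> + eps t \<omega>);
         xs = (\<lambda>\<omega> t. x t \<omega>);
         V = (\<lambda>\<omega> t. Vmat lam eta (xs \<omega>) t);
         th = (\<lambda>\<omega> t. theta lam eta (xs \<omega>) (y \<omega>) t);
         X = (\<lambda>t \<omega>. (mnorm (V \<omega> t) (th \<omega> t - theta_star))\<^sup>2);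
         N = (\<lambda>t \<omega>. 2 * eta * eps t \<omega> * ((th \<omega> (t - 1) - theta_star) \<bullet> x t \<omega>)
                 - 2 * eta ^ 3 * eps t \<omega> * ((th \<omega> (t - 1) - theta_star) \<bullet> x t \<omega>)
                     * (mnorm (matrix_inv (V \<omega> (t - 1))) (x t \<omega>)) ^ 4
                 + 2 * (eps t \<omega>)\<^sup>2 * eta\<^sup>2 * (mnorm (matrix_inv (V \<omega> (t - 1))) (x t \<omega>))\<^sup>2)
     in (\<forall>t\<ge>1. AE \<omega> in M. X t \<omega> \<le> X (t - 1) \<omega> + N t \<omega>)
      \<and> (\<forall>t. AE \<omega> in M. X t \<omega> \<le> X 0 \<omega> + (\<Sum>i=1..t. N i \<omega>))"
proof -
  have P: "\<forall>\<omega>\<in>space M. \<forall>k.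
      (\<lambda>t \<omega>. (mnorm (Vmat lam eta (\<lambda>t. x t \<omega>) t) (theta lam eta (\<lambda>t. x t \<omega>) (\<lambda>t. theta_star \<bullet> x t \<omega> + eps t \<omega>) t - theta_star))\<^sup>2) (Suc k) \<omega>
      \<le> (\<lambda>t \<omega>. (mnorm (Vmat lam eta (\<lambda>t. x t \<omega>) t) (theta lam eta (\<lambda>t. x t \<omega>) (\<lambda>t. theta_star \<bullet> x t \<omega> + eps t \<omega>) t - theta_star))\<^sup>2) k \<omega>
       + (\<lambda>t \<omega>. 2 * eta * eps t \<omega> * ((theta lam eta (\<lambda>t. x t \<omega>) (\<lambda>t. theta_star \<bullet> x t \<omega> + eps t \<omega>) (t - 1) - theta_star) \<bullet> x t \<omega>)
                 - 2 * eta ^ 3 * eps t \<omega> * ((theta lam eta (\<lambda>t. x t \<omega>) (\<lambda>t. theta_star \<bullet> x t \<omega> + eps t \<omega>) (t - 1) - theta_star) \<bullet> x t \<omega>)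
                     * (mnorm (matrix_inv (Vmat lam eta (\<lambda>t. x t \<omega>) (t - 1))) (x t \<omega>)) ^ 4
                 + 2 * (eps t \<omega>)\<^sup>2 * eta\<^sup>2 * (mnorm (matrix_inv (Vmat lam eta (\<lambda>t. x t \<omega>) (t - 1))) (x t \<omega>))\<^sup>2) (Suc k) \<omega>"
    apply (intro ballI allI)
    subgoal for \<omega> k
    proof -
      assume w: "\<omega> \<in> space M"
      have nx: "norm (x (Suc k) \<omega>) \<le> L" using assms(3)[of "Suc k" \<omega>] assms(4)[of "Suc k" \<omega>] w by auto
      note S = step[OF assms(9) assms(10) assms(11), where xs="\<lambda>t. x t \<omega>" and t=k and ys="\<lambda>t. theta_star \<bullet> x t \<omega> + eps t \<omega>" and ts=theta_star and e="\<lambda>t. eps t \<omega>", OF nx refl]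
      show ?thesis using S by (simp only: diff_Suc_1)
    qed
    done
  show ?thesis unfolding Let_def
    by (rule final_combine[OF P])
qed

end
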